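(* There is an absolute constant $c>0$ such that for all positive integers $f,l$ and every $N$ that is a positive multiple of $l^f$, there is an Ising instance on $N$ variables (with integer coefficients) whose graph $G$ has every vertex of degree at most $d=f(l-1)$, and which has at least $$2^{N\left(1-\frac{f\log_2(f\sqrt l/c)}{l}\right)}$$ global minima, every one of which is a $(2^f-1)$-minimum.
   Context: An Ising instance on $N$ variables is given by real numbers $h_i$ and $J_{ij}=J_{ji}$ ($i\neq j$), $J_{ii}=0$, and (up to an additive constant, which is irrelevant) defines $H(S)=\frac14\sum_ih_iS_i+\frac14\sum_{i<j}J_{ij}S_iS_j$ on $S\in\{-1,+1\}^N$. Its graph $G$ has vertices $1,\dots,N$ and an edge $\{i,j\}$ iff $J_{ij}\neq0$. A global minimum is an assignment minimizing $H$. For an integer $k\ge1$, an assignment $A$ is a $k$-minimum if every assignment differing from $A$ in at least one and at most $k$ variables has a strictly larger value of $H$. *)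

theory Defs
  imports Complex_Main "HOL-Library.FuncSet"
begin

definition assignments :: "nat \<Rightarrow> (nat \<Rightarrow> int) set" where
  "assignments N = {0..<N} \<rightarrow>\<^sub>E {-1, 1}"

definition ising_instance :: "nat \<Rightarrow> (nat \<Rightarrow> int) \<Rightarrow> (nat \<Rightarrow> nat \<Rightarrow> int) \<Rightarrow> bool" where
  "ising_instance N h J \<longleftrightarrow> (\<forall>i<N. \<forall>j<N. J i j = J j i) \<and> (\<forall>i<N. J i i = 0)"

definition energy :: "nat \<Rightarrow> (nat \<Rightarrow> int) \<Rightarrow> (nat \<Rightarrow> nat \<Rightarrow> int) \<Rightarrow> (nat \<Rightarrow> int) \<Rightarrow> real" where
  "energy N h J S = (1/4) * (\<Sum>i<N. real_of_int (h i * S i))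
     + (1/4) * (\<Sum>(i,j)\<in>{(i,j). i < j \<and> j < N}. real_of_int (J i j * S i * S j))"

definition vertex_degree :: "nat \<Rightarrow> (nat \<Rightarrow> nat \<Rightarrow> int) \<Rightarrow> nat \<Rightarrow> nat" where
  "vertex_degree N J i = card {j. j < N \<and> j \<noteq> i \<and> J i j \<noteq> 0}"

definition hamming :: "nat \<Rightarrow> (nat \<Rightarrow> int) \<Rightarrow> (nat \<Rightarrow> int) \<Rightarrow> nat" where
  "hamming N A B = card {i. i < N \<and> A i \<noteq> B i}"

definition global_min :: "nat \<Rightarrow> (nat \<Rightarrow> int) \<Rightarrow> (nat \<Rightarrow> nat \<Rightarrow> int) \<Rightarrow> (nat \<Rightarrow> int) \<Rightarrow> bool" where
  "global_min N h J A \<longleftrightarrow> A \<in> assignments N \<and>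
     (\<forall>S \<in> assignments N. energy N h J A \<le> energy N h J S)"

definition k_minimum :: "nat \<Rightarrow> (nat \<Rightarrow> int) \<Rightarrow> (nat \<Rightarrow> nat \<Rightarrow> int) \<Rightarrow> nat \<Rightarrow> (nat \<Rightarrow> int) \<Rightarrow> bool" where
  "k_minimum N h J k A \<longleftrightarrow> A \<in> assignments N \<and>
     (\<forall>S \<in> assignments N. 1 \<le> hamming N A S \<and> hamming N A S \<le> k \<longrightarrow>
        energy N h J A < energy N h J S)"

end

theory Submission
  imports Defs "HOL-Analysis.Convex"
begin


lemma exp_avg_ge:
  fixes a :: "'a \<Rightarrow> real"
  assumes "finite Y" "Y \<noteq> {}"
  shows "real (card Y) * exp ((\<Sum>U\<in>Y. a U) / card Y) \<le> (\<Sum>U\<in>Y. exp (a U))"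
proof -
  define b where "b = (\<Sum>U\<in>Y. a U) / card Y"
  have "\<forall>U\<in>Y. exp b * (1 + (a U - b)) \<le> exp (a U)"
  proof
    fix U assume "U\<in>Y"
    have "1 + (a U - b) \<le> exp (a U - b)" by (rule exp_ge_add_one_self)
    hence "exp b * (1 + (a U - b)) \<le> exp b * exp (a U - b)" by simp
    also have "\<dots> = exp (a U)" by (simp add: exp_add[symmetric])
    finally show "exp b * (1 + (a U - b)) \<le> exp (a U)" .
  qed
  hence "(\<Sum>U\<in>Y. exp b * (1 + (a U - b))) \<le> (\<Sum>U\<in>Y. exp (a U))" by (intro sum_mono) auto
  moreover have "(\<Sum>U\<in>Y. exp b * (1 + (a U - b))) = exp b * (card Y + (\<Sum>U\<in>Y. a U) - card Y * b)"
    by (simp add: sum_distrib_left[symmetric] sum.distrib sum_subtractf)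
  moreover have "card Y * b = (\<Sum>U\<in>Y. a U)" using assms by (simp add: b_def)
  ultimately show ?thesis by (simp add: b_def[symmetric] mult.commute)
qed

lemma sum_split_add:
  fixes f :: "nat \<Rightarrow> 'a::comm_monoid_add"
  shows "(\<Sum>i<p+q. f i) = (\<Sum>i<p. f i) + (\<Sum>i<q. f (p+i))"
  by (induction q) (auto simp: add.assoc)

lemma second_moment:
  fixes X :: "(nat \<Rightarrow> int) set"
  assumes finX: "finite X" and pm: "\<forall>S\<in>X. S x = 1 \<or> S x = -1"
    and neg: "\<forall>S\<in>X. neg S \<in> X \<and> neg (neg S) = S \<and> neg S x = - S x"
  shows "(\<Sum>U\<in>{0..<p} \<rightarrow>\<^sub>E X. (\<Sum>i<p. U i x)^2) = int p * int (card X ^ p)"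
proof -
  define Y where "Y = {0..<p} \<rightarrow>\<^sub>E X"
  have cY: "card Y = card X ^ p" unfolding Y_def by (simp add: card_PiE)
  have finY: "finite Y" unfolding Y_def using finX by (simp add: finite_PiE)
  have inner: "(\<Sum>U\<in>Y. U i x * U j x) = (if i = j then int (card Y) else 0)"
    if ij: "i < p" "j < p" for i j
  proof (cases "i = j")
    case True
    have "(\<Sum>U\<in>Y. U i x * U j x) = (\<Sum>U\<in>Y. 1)"
    proof (rule sum.cong)
      fix U assume "U \<in> Y"
      hence "U i \<in> X" using ij unfolding Y_def by auto
      thus "U i x * U j x = 1" using pm True by fastforce
    qed simp
    thus ?thesis using True by simp
  next
    case False
    define tau where "tau = (\<lambda>U. U(j := neg (U j)))"
    define g where "g = (\<lambda>U::nat \<Rightarrow> nat \<Rightarrow> int. U i x * U j x)"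
    have tY: "tau U \<in> Y" if "U \<in> Y" for U
      using that ij neg unfolding Y_def tau_def by (auto simp: PiE_def extensional_def Pi_def)
    have tt: "tau (tau U) = U" if "U \<in> Y" for U
    proof -
      have "U j \<in> X" using that ij unfolding Y_def by auto
      thus ?thesis using neg unfolding tau_def by auto
    qed
    have gt: "(\<lambda>U. - g U) (tau U) = g U" if "U \<in> Y" for U
    proof -
      have "U j \<in> X" using that ij unfolding Y_def by auto
      thus ?thesis using neg False unfolding tau_def g_def by auto
    qed
    have "sum g Y = sum (\<lambda>U. - g U) Y"
      by (rule sum.reindex_bij_witness[where i=tau and j=tau]) (use tY tt gt in auto)
    hence "sum g Y = 0" by (simp add: sum_negf)
    thus ?thesis using False unfolding g_def by simp
  qed
  have "(\<Sum>U\<in>Y. (\<Sum>i<p. U i x)^2) = (\<Sum>U\<in>Y. \<Sum>i<p. \<Sum>j<p. U i x * U j x)"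
    by (simp add: power2_eq_square sum_product)
  also have "\<dots> = (\<Sum>i<p. \<Sum>j<p. \<Sum>U\<in>Y. U i x * U j x)"
    by (simp add: sum.swap[of _ Y])
  also have "\<dots> = (\<Sum>i<p. \<Sum>j<p. if i = j then int (card Y) else 0)"
    using inner by (intro sum.cong) auto
  also have "\<dots> = int p * int (card Y)" by simp
  finally show ?thesis using cY unfolding Y_def by simp
qed

lemma geom_bound:
  fixes p :: nat and m :: nat
  assumes "m \<ge> 1"
  shows "(\<Sum>t\<in>{-int p..int p}. exp (-2 * \<bar>real_of_int t\<bar> / sqrt m)) \<le> 3 * sqrt m"
proof -
  define g where "g = (\<lambda>t::int. exp (-2 * \<bar>real_of_int t\<bar> / sqrt m))"
  define r where "r = exp (-2 / sqrt m)"
  have sm: "sqrt m \<ge> 1" using assms by simp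
  have r0: "0 < r" "r < 1" using sm unfolding r_def by auto
  have gpos: "g t \<ge> 0" for t unfolding g_def by simp
  have split: "{-int p..int p} = {-int p..-1} \<union> {0..int p}" by auto
  have "(\<Sum>t\<in>{-int p..int p}. g t) = (\<Sum>t\<in>{-int p..-1}. g t) + (\<Sum>t\<in>{0..int p}. g t)"
    unfolding split by (rule sum.union_disjoint) auto
  moreover have "(\<Sum>t\<in>{-int p..-1}. g t) = (\<Sum>t\<in>{1..int p}. g t)"
  proof -
    have "{-int p..-1} = uminus ` {1..int p}"
      by (auto simp: image_iff intro!: bexI[where x="- _"])
    hence "(\<Sum>t\<in>{-int p..-1}. g t) = (\<Sum>t\<in>uminus ` {1..int p}. g t)" by simp
    also have "\<dots> = (\<Sum>t\<in>{1..int p}. g (- t))"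
      by (subst sum.reindex) (auto simp: inj_on_def)
    finally have "(\<Sum>t\<in>{-int p..-1}. g t) = (\<Sum>t\<in>{1..int p}. g (- t))" .
    thus ?thesis unfolding g_def by simp
  qed
  moreover have "(\<Sum>t\<in>{1..int p}. g t) \<le> (\<Sum>t\<in>{0..int p}. g t)"
    by (rule sum_mono2) (auto simp: gpos)
  moreover have "(\<Sum>t\<in>{0..int p}. g t) = (\<Sum>n<Suc p. r ^ n)"
  proof -
    have "{0..int p} = int ` {..<Suc p}" by (auto simp: image_iff intro!: bexI[where x="nat _"])
    hence "(\<Sum>t\<in>{0..int p}. g t) = (\<Sum>n<Suc p. g (int n))" by (simp add: sum.reindex)
    also have "\<dots> = (\<Sum>n<Suc p. r ^ n)"
    proof (rule sum.cong)
      fix n assume "n \<in> {..<Suc p}"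
      have "g (int n) = exp (real n * (-2 / sqrt m))" unfolding g_def by simp
      also have "\<dots> = r ^ n" unfolding r_def by (rule exp_of_nat_mult)
      finally show "g (int n) = r ^ n" .
    qed simp
    finally show ?thesis .
  qed
  moreover have "(\<Sum>n<Suc p. r ^ n) \<le> 1 / (1 - r)"
  proof -
    have "(\<Sum>n<Suc p. r ^ n) = (1 - r ^ Suc p) / (1 - r)" using r0 by (simp add: sum_gp_strict del: sum.lessThan_Suc)
    also have "\<dots> \<le> 1 / (1 - r)" using r0 by (intro divide_right_mono) auto
    finally show ?thesis .
  qed
  moreover have "1 / (1 - r) \<le> 1 + sqrt m / 2"
  proof -
    define y where "y = 2 / sqrt m"
    have y0: "y > 0" using sm unfolding y_def by simp
    have "1 + y \<le> exp y" by (rule exp_ge_add_one_self)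
    have re: "r = 1 / exp y" unfolding r_def y_def by (simp add: exp_minus field_simps)
    have "1 / exp y \<le> 1 / (1 + y)" using y0 \<open>1 + y \<le> exp y\<close>
      by (intro divide_left_mono) auto
    hence "r \<le> 1 / (1 + y)" using re by simp
    hence "1 - r \<ge> y / (1 + y)" using y0 by (simp add: field_simps)
    hence "1 / (1 - r) \<le> 1 / (y / (1 + y))" using y0 r0 by (intro divide_left_mono) (auto intro!: mult_pos_pos)
    also have "\<dots> = 1 + sqrt m / 2" unfolding y_def using sm by (simp add: field_simps)
    finally show ?thesis .
  qed
  ultimately have "(\<Sum>t\<in>{-int p..int p}. g t) \<le> 2 + sqrt m" by linarith
  also have "\<dots> \<le> 3 * sqrt m" using sm by simp
  finally show ?thesis unfolding g_def .
qed

lemma amgm_sqrt: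
  fixes t m :: real
  assumes "m > 0"
  shows "\<bar>t\<bar> / sqrt m \<le> (t^2 / m + 1) / 2"
proof -
  define s where "s = sqrt m"
  have s0: "s > 0" using assms unfolding s_def by simp
  have ms: "m = s^2" using assms unfolding s_def by simp
  have "0 \<le> (\<bar>t\<bar> - s)^2" by simp
  hence "2 * \<bar>t\<bar> * s \<le> t^2 + s^2" by (simp add: power2_eq_square algebra_simps)
  hence "\<bar>t\<bar> / s \<le> (t^2 / s^2 + 1) / 2" using s0 by (simp add: field_simps power2_eq_square)
  hence "\<bar>t\<bar> / sqrt m \<le> (t^2 / (sqrt m)^2 + 1) / 2" by (simp only: s_def)
  thus ?thesis using assms by simp
qed

definition kappa :: real where "kappa = exp (-3/2) / 3"

lemma kappa_pos: "kappa > 0" unfolding kappa_def by simp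

lemma count_zero_sum:
  fixes X :: "(nat \<Rightarrow> int) set" and C :: "nat set" and neg :: "(nat \<Rightarrow> int) \<Rightarrow> (nat \<Rightarrow> int)"
  assumes finX: "finite X" and finC: "finite C"
    and pm: "\<forall>S\<in>X. \<forall>x\<in>C. S x = 1 \<or> S x = -1"
    and neg: "\<forall>S\<in>X. neg S \<in> X \<and> neg (neg S) = S \<and> (\<forall>x\<in>C. neg S x = - S x)"
    and m: "m = 2*p" and p: "p > 0"
  shows "real (card X) ^ m * (kappa / sqrt m) ^ card C
     \<le> real (card {A \<in> {0..<m} \<rightarrow>\<^sub>E X. \<forall>x\<in>C. (\<Sum>i<m. A i x) = 0})"
proof (cases "X = {}")
  case True thus ?thesis using m p by (simp add: power_0_left)
next
  case Xne: False
  define Y where "Y = {0..<p} \<rightarrow>\<^sub>E X"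
  define sg where "sg = (\<lambda>(U::nat \<Rightarrow> nat \<Rightarrow> int) x. \<Sum>i<p. U i x)"
  define key where "key = (\<lambda>U. restrict (sg U) C)"
  define P where "P = {(U,V). U \<in> Y \<and> V \<in> Y \<and> key U = key V}"
  define Z where "Z = {A \<in> {0..<m} \<rightarrow>\<^sub>E X. \<forall>x\<in>C. (\<Sum>i<m. A i x) = 0}"
  define K where "K = key ` Y"
  define r where "r = (\<lambda>k. card {U \<in> Y. key U = k})"
  define w where "w = (\<lambda>k::nat \<Rightarrow> int. exp (- (\<Sum>x\<in>C. \<bar>real_of_int (k x)\<bar>) / sqrt m))"
  have finY: "finite Y" unfolding Y_def using finX by (simp add: finite_PiE)
  have cY: "card Y = card X ^ p" unfolding Y_def by (simp add: card_PiE)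
  have Yne: "Y \<noteq> {}" unfolding Y_def using Xne by (simp add: PiE_eq_empty_iff)
  have finZ: "finite Z" unfolding Z_def using finX by (simp add: finite_PiE)
  have finK: "finite K" unfolding K_def using finY by simp
  have m0: "m \<ge> 1" using m p by simp
  have st1: "card P \<le> card Z"
  proof -
    define Phi where "Phi = (\<lambda>(U::nat \<Rightarrow> nat \<Rightarrow> int,V::nat \<Rightarrow> nat \<Rightarrow> int). restrict (\<lambda>i. if i < p then U i else neg (V (i - p))) {0..<m})"
    have "inj_on Phi P"
    proof (rule inj_onI)
      fix a b assume a: "a \<in> P" and b: "b \<in> P" and e: "Phi a = Phi b"
      obtain U V where aUV: "a = (U,V)" by (cases a)
      obtain U' V' where bUV: "b = (U',V')" by (cases b)
      have U: "U \<in> Y" "V \<in> Y" "U' \<in> Y" "V' \<in> Y" using a b aUV bUV unfolding P_def by auto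
      have e2: "(if i < p then U i else neg (V (i - p))) = (if i < p then U' i else neg (V' (i - p)))"
        if "i < m" for i
      proof -
        have "Phi a i = Phi b i" using e by simp
        thus ?thesis using that unfolding aUV bUV Phi_def by simp
      qed
      have "U = U'"
      proof
        fix i show "U i = U' i"
        proof (cases "i < p")
          case True thus ?thesis using e2[of i] m by auto
        next
          case False thus ?thesis using U unfolding Y_def by (auto simp: PiE_def extensional_def)
        qed
      qed
      moreover have "V = V'"
      proof
        fix i show "V i = V' i"
        proof (cases "i < p")
          case True
          hence "neg (V i) = neg (V' i)" using e2[of "i + p"] m by auto
          hence "neg (neg (V i)) = neg (neg (V' i))" by simp
          moreover have "V i \<in> X" "V' i \<in> X" using U True unfolding Y_def by auto
          ultimately show ?thesis using neg by auto
        next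
          case False thus ?thesis using U unfolding Y_def by (auto simp: PiE_def extensional_def)
        qed
      qed
      ultimately show "a = b" using aUV bUV by simp
    qed
    moreover have "Phi ` P \<subseteq> Z"
    proof
      fix A assume "A \<in> Phi ` P"
      then obtain U V where UV: "U \<in> Y" "V \<in> Y" "key U = key V" and A: "A = Phi (U,V)"
        unfolding P_def by auto
      have "A \<in> {0..<m} \<rightarrow>\<^sub>E X"
      proof -
        have "A i \<in> X" if i: "i < m" for i
        proof (cases "i < p")
          case True thus ?thesis using UV i unfolding A Phi_def Y_def by auto
        next
          case False
          hence "i - p < p" using i m by simp
          hence "V (i - p) \<in> X" using UV unfolding Y_def by auto
          thus ?thesis using False i neg unfolding A Phi_def by auto
        qed
        moreover have "A i = undefined" if "i \<notin> {0..<m}" for i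
          using that unfolding A Phi_def by simp
        ultimately show ?thesis by (auto simp: PiE_def extensional_def)
      qed
      moreover have "\<forall>x\<in>C. (\<Sum>i<m. A i x) = 0"
      proof
        fix x assume x: "x \<in> C"
        have 1: "(\<Sum>i<m. A i x) = (\<Sum>i<p. A i x) + (\<Sum>i<p. A (p+i) x)"
          using m sum_split_add[of "\<lambda>i. A i x" p p] by (simp add: mult_2)
        have 2: "(\<Sum>i<p. A i x) = sg U x" unfolding A Phi_def sg_def using m by (intro sum.cong) auto
        have 3: "(\<Sum>i<p. A (p+i) x) = (\<Sum>i<p. - V i x)"
        proof (rule sum.cong)
          fix i assume i: "i \<in> {..<p}"
          hence "V i \<in> X" using UV unfolding Y_def by auto
          thus "A (p+i) x = - V i x" using i x neg m unfolding A Phi_def by auto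
        qed simp
        have 4: "(\<Sum>i<p. - V i x) = - sg V x" unfolding sg_def by (simp add: sum_negf)
        have 5: "sg U x = sg V x" using UV(3) x unfolding key_def by (metis restrict_apply')
        show "(\<Sum>i<m. A i x) = 0" using 1 2 3 4 5 by simp
      qed
      ultimately show "A \<in> Z" unfolding Z_def by simp
    qed
    ultimately show ?thesis using finZ by (metis card_inj_on_le)
  qed
  have st2: "card P = (\<Sum>k\<in>K. r k ^ 2)"
  proof -
    have Peq: "P = (\<Union>k\<in>K. {U\<in>Y. key U = k} \<times> {U\<in>Y. key U = k})" unfolding P_def K_def by auto
    have "card (\<Union>k\<in>K. {U\<in>Y. key U = k} \<times> {U\<in>Y. key U = k}) = (\<Sum>k\<in>K. card ({U\<in>Y. key U = k} \<times> {U\<in>Y. key U = k}))"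
      by (rule card_UN_disjoint) (use finK finY in auto)
    hence "card P = (\<Sum>k\<in>K. card ({U\<in>Y. key U = k} \<times> {U\<in>Y. key U = k}))"
      by (simp only: Peq)
    thus ?thesis unfolding r_def by (simp add: card_cartesian_product power2_eq_square)
  qed
  have st3: "(\<Sum>U\<in>Y. w (key U)) = (\<Sum>k\<in>K. real (r k) * w k)"
  proof -
    have "(\<Sum>U\<in>Y. w (key U)) = (\<Sum>k\<in>K. \<Sum>U\<in>{U\<in>Y. key U = k}. w (key U))"
      unfolding K_def by (rule sum.image_gen[OF finY])
    also have "\<dots> = (\<Sum>k\<in>K. real (r k) * w k)"
    proof (rule sum.cong)
      fix k assume "k \<in> K"
      have "(\<Sum>U\<in>{U\<in>Y. key U = k}. w (key U)) = (\<Sum>U\<in>{U\<in>Y. key U = k}. w k)"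
        by (rule sum.cong) auto
      thus "(\<Sum>U\<in>{U\<in>Y. key U = k}. w (key U)) = real (r k) * w k" unfolding r_def by simp
    qed simp
    finally show ?thesis .
  qed
  have st4: "(\<Sum>k\<in>K. real (r k) * w k)^2 \<le> (\<Sum>k\<in>K. (real (r k))^2) * (\<Sum>k\<in>K. (w k)^2)"
    by (rule Cauchy_Schwarz_ineq_sum)
  have st5: "(\<Sum>k\<in>K. (w k)^2) \<le> (3 * sqrt m) ^ card C"
  proof -
    define B where "B = C \<rightarrow>\<^sub>E {-int p..int p}"
    define g where "g = (\<lambda>t::int. exp (-2 * \<bar>real_of_int t\<bar> / sqrt m))"
    have KB: "K \<subseteq> B"
    proof
      fix k assume "k \<in> K"
      then obtain U where U: "U \<in> Y" "k = key U" unfolding K_def by auto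
      have "\<bar>sg U x\<bar> \<le> int p" if x: "x \<in> C" for x
      proof -
        have "\<bar>sg U x\<bar> \<le> (\<Sum>i<p. \<bar>U i x\<bar>)" unfolding sg_def by (rule sum_abs)
        also have "\<dots> = (\<Sum>i<p. 1)"
        proof (rule sum.cong)
          fix i assume "i \<in> {..<p}" hence "U i \<in> X" using U unfolding Y_def by auto
          thus "\<bar>U i x\<bar> = 1" using pm x by fastforce
        qed simp
        finally show ?thesis by simp
      qed
      hence "\<forall>x\<in>C. sg U x \<in> {-int p..int p}"
      proof (intro ballI)
        fix x assume "x \<in> C"
        hence "\<bar>sg U x\<bar> \<le> int p" using \<open>\<And>x. x \<in> C \<Longrightarrow> \<bar>sg U x\<bar> \<le> int p\<close> by blast
        thus "sg U x \<in> {-int p..int p}" by (simp add: abs_le_iff)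
      qed
      thus "k \<in> B" unfolding B_def U key_def by (simp add: restrict_PiE_iff)
    qed
    have wk: "(w k)^2 = (\<Prod>x\<in>C. g (k x))" for k
    proof -
      have "(w k)^2 = exp (2 * (- (\<Sum>x\<in>C. \<bar>real_of_int (k x)\<bar>) / sqrt m))"
        unfolding w_def by (simp add: power2_eq_square exp_add[symmetric])
      also have "\<dots> = exp (\<Sum>x\<in>C. -2 * \<bar>real_of_int (k x)\<bar> / sqrt m)"
        by (simp add: sum_divide_distrib sum_distrib_left sum_negf)
      also have "\<dots> = (\<Prod>x\<in>C. g (k x))" unfolding g_def using finC by (simp add: exp_sum)
      finally show ?thesis .
    qed
    have "(\<Sum>k\<in>K. (w k)^2) \<le> (\<Sum>k\<in>B. (w k)^2)"
      by (rule sum_mono2[OF _ KB]) (auto simp: B_def finC intro!: finite_PiE)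
    also have "\<dots> = (\<Sum>k\<in>B. \<Prod>x\<in>C. g (k x))" using wk by simp
    also have "\<dots> = (\<Prod>x\<in>C. \<Sum>t\<in>{-int p..int p}. g t)"
      unfolding B_def by (rule prod_sum_PiE[of C "\<lambda>_. {-int p..int p}" "\<lambda>_ t. g t", symmetric]) (use finC in auto)
    also have "\<dots> = (\<Sum>t\<in>{-int p..int p}. g t) ^ card C" by simp
    also have "\<dots> \<le> (3 * sqrt m) ^ card C"
      by (rule power_mono) (use geom_bound[OF m0, of p] in \<open>auto simp: g_def intro: sum_nonneg\<close>)
    finally show ?thesis .
  qed
  have st6: "real (card Y) * exp (- 3 * card C / 4) \<le> (\<Sum>U\<in>Y. w (key U))"
  proof -
    define a where "a = (\<lambda>U. - (\<Sum>x\<in>C. ((real_of_int (sg U x))^2 / m + 1) / 2))"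
    have aw: "exp (a U) \<le> w (key U)" for U
    proof -
      have "(\<Sum>x\<in>C. \<bar>real_of_int (key U x)\<bar>) / sqrt m = (\<Sum>x\<in>C. \<bar>real_of_int (sg U x)\<bar> / sqrt m)"
        unfolding key_def by (simp add: sum_divide_distrib)
      also have "\<dots> \<le> (\<Sum>x\<in>C. ((real_of_int (sg U x))^2 / m + 1) / 2)"
        by (rule sum_mono) (rule amgm_sqrt, use m0 in simp)
      finally show ?thesis unfolding a_def w_def by simp
    qed
    have smo: "(\<Sum>U\<in>Y. (real_of_int (sg U x))^2) = real p * card Y" if "x \<in> C" for x
    proof -
      have "(\<Sum>U\<in>Y. (sg U x)^2) = int p * int (card X ^ p)"
        unfolding Y_def sg_def by (rule second_moment[where neg=neg]) (use finX pm neg that in auto)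
      hence "real_of_int (\<Sum>U\<in>Y. (sg U x)^2) = real p * card Y" using cY by simp
      thus ?thesis by simp
    qed
    have inner: "(\<Sum>U\<in>Y. ((real_of_int (sg U x))^2 / m + 1) / 2) = 3 * card Y / 4" if "x \<in> C" for x
    proof -
      have "(\<Sum>U\<in>Y. ((real_of_int (sg U x))^2 / m + 1) / 2) = ((\<Sum>U\<in>Y. (real_of_int (sg U x))^2) / m + card Y) / 2"
        by (simp add: sum_divide_distrib[symmetric] sum.distrib)
      also have "\<dots> = 3 * card Y / 4" using smo[OF that] m p by (simp add: field_simps)
      finally show ?thesis .
    qed
    have "(\<Sum>U\<in>Y. a U) = - (\<Sum>x\<in>C. \<Sum>U\<in>Y. ((real_of_int (sg U x))^2 / m + 1) / 2)"
      unfolding a_def by (simp add: sum_negf sum.swap[of _ C])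
    also have "\<dots> = - (\<Sum>x\<in>C. 3 * card Y / 4)"
      using inner by (intro arg_cong[where f=uminus] sum.cong) auto
    also have "\<dots> = - 3 * card C * card Y / 4" by simp
    finally have sa: "(\<Sum>U\<in>Y. a U) / card Y = - 3 * card C / 4" using Yne finY by (simp add: field_simps)
    have "real (card Y) * exp (- 3 * card C / 4) \<le> (\<Sum>U\<in>Y. exp (a U))"
      using exp_avg_ge[OF finY Yne, of a] sa by simp
    also have "\<dots> \<le> (\<Sum>U\<in>Y. w (key U))" by (rule sum_mono) (rule aw)
    finally show ?thesis .
  qed
  define E where "E = exp (- 3 * card C / 4)"
  define D where "D = (3 * sqrt m) ^ card C"
  have D0: "D > 0" unfolding D_def using m0 by simp
  have "(real (card Y) * E)^2 \<le> (\<Sum>U\<in>Y. w (key U))^2"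
    using st6 unfolding E_def by (intro power_mono) (auto simp: E_def)
  also have "\<dots> \<le> (\<Sum>k\<in>K. (real (r k))^2) * (\<Sum>k\<in>K. (w k)^2)" using st3 st4 by simp
  also have "\<dots> \<le> real (card P) * D"
  proof -
    have "(\<Sum>k\<in>K. (real (r k))^2) = real (card P)" using st2 by simp
    thus ?thesis using st5 unfolding D_def by (auto intro!: mult_left_mono sum_nonneg)
  qed
  also have "\<dots> \<le> real (card Z) * D" using st1 D0 by simp
  finally have main: "(real (card Y) * E)^2 \<le> real (card Z) * D" .
  have E2: "E^2 = exp (-3/2) ^ card C"
  proof -
    have "E^2 = exp (real (card C) * (-3/2))" unfolding E_def by (simp add: power2_eq_square exp_add[symmetric])
    thus ?thesis by (simp only: exp_of_nat_mult)
  qed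
  have q1: "(real (card Y) * E)^2 = real (card X)^m * E^2"
  proof -
    have "real (card Y) ^ 2 = real (card X) ^ m" using cY m by (simp add: power_mult[symmetric] mult.commute)
    thus ?thesis by (simp add: power_mult_distrib)
  qed
  have q2: "(kappa / sqrt m) ^ card C = E^2 / D"
    unfolding kappa_def D_def E2 by (simp add: power_divide power_mult_distrib)
  have "real (card X) ^ m * (kappa / sqrt m) ^ card C = (real (card Y) * E)^2 / D"
    using q1 q2 by simp
  also have "\<dots> \<le> real (card Z)" using main D0 by (simp add: divide_le_eq)
  finally show ?thesis unfolding Z_def .
qed



fun grid :: "nat \<Rightarrow> nat \<Rightarrow> nat \<Rightarrow> nat \<Rightarrow> nat set" where
  "grid l m q 0 = {0..<q}"
| "grid l m q (Suc f) = (\<lambda>(u,i). u*l+i) ` (grid l m q f \<times> {0..<m})"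

fun lines :: "nat \<Rightarrow> nat \<Rightarrow> nat \<Rightarrow> nat \<Rightarrow> nat set set" where
  "lines l m q 0 = {}"
| "lines l m q (Suc f) = (\<lambda>u. (\<lambda>i. u*l+i) ` {0..<m}) ` grid l m q f
     \<union> (\<lambda>(L,i). (\<lambda>u. u*l+i) ` L) ` (lines l m q f \<times> {0..<m})"

declare image_add_atLeastAtMost[simp del] image_add_atLeastAtMost'[simp del]
  image_add_atLeastLessThan[simp del] image_add_atLeastLessThan'[simp del]

lemma lines_SucE:
  assumes "L \<in> lines l m q (Suc f)"
  obtains (T1) u where "u \<in> grid l m q f" "L = (\<lambda>i. u*l+i) ` {0..<m}"
    | (T2) L0 i where "L0 \<in> lines l m q f" "i < m" "L = (\<lambda>u. u*l+i) ` L0"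
  using assms by auto

lemma divmod_lin:
  assumes "i < (l::nat)"
  shows "(u*l+i) div l = u" "(u*l+i) mod l = i"
  using assms by auto

lemma lin_inj:
  assumes "i < (l::nat)" "i' < l" "u*l+i = u'*l+i'"
  shows "u = u'" "i = i'"
  using divmod_lin[OF assms(1), of u] divmod_lin[OF assms(2), of u'] assms(3) by metis+

lemma lin_inj':
  assumes "i < (m::nat)" "i' < m" "m \<le> l" "u*l+i = u'*l+i'"
  shows "u = u' \<and> i = i'"
  using lin_inj[of i l i' u u'] assms by auto

lemma grid_bound:
  assumes "m \<le> l"
  shows "grid l m q f \<subseteq> {0..<q*l^f}"
proof (induction f)
  case 0 thus ?case by simp
next
  case (Suc f)
  show ?case
  proof
    fix v assume "v \<in> grid l m q (Suc f)"
    then obtain u i where ui: "u \<in> grid l m q f" "i < m" "v = u*l+i" by auto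
    have "u < q*l^f" using ui Suc by auto
    hence "u + 1 \<le> q*l^f" by simp
    hence "(u+1)*l \<le> q*l^f*l" by (rule mult_right_mono) simp
    moreover have "u*l+i < (u+1)*l" using ui assms by simp
    ultimately show "v \<in> {0..<q*l^Suc f}" using ui by (simp add: mult.commute mult.left_commute)
  qed
qed

lemma finite_grid: "finite (grid l m q f)"
  by (induction f) auto

lemma card_grid:
  assumes "m \<le> l"
  shows "card (grid l m q f) = q * m^f"
proof (induction f)
  case 0 thus ?case by simp
next
  case (Suc f)
  have "inj_on (\<lambda>(u,i). u*l+i) (grid l m q f \<times> {0..<m})"
    using assms by (auto simp: inj_on_def dest: lin_inj')
  hence "card (grid l m q (Suc f)) = card (grid l m q f \<times> {0..<m})"
    by (simp add: card_image)
  also have "\<dots> = q * m^Suc f" using Suc finite_grid by (simp add: card_cartesian_product)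
  finally show ?case .
qed

lemma finite_lines: "finite (lines l m q f)"
  by (induction f) (auto simp: finite_grid)

lemma lines_sub: "L \<in> lines l m q f \<Longrightarrow> L \<subseteq> grid l m q f"
proof (induction f arbitrary: L)
  case 0 thus ?case by simp
next
  case (Suc f)
  from Suc.prems show ?case
  proof (cases rule: lines_SucE)
    case (T1 u) thus ?thesis by auto
  next
    case (T2 L0 i)
    show ?thesis
    proof
      fix x assume "x \<in> L"
      then obtain u where u: "u \<in> L0" "x = u*l+i" using T2 by auto
      hence "u \<in> grid l m q f" using Suc.IH T2 by auto
      thus "x \<in> grid l m q (Suc f)" using u T2 by (auto intro!: image_eqI[where x="(u,i)"])
    qed
  qed
qed

lemma lines_card: "L \<in> lines l m q f \<Longrightarrow> card L \<le> m"
proof (induction f arbitrary: L)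
  case 0 thus ?case by simp
next
  case (Suc f)
  from Suc.prems show ?case
  proof (cases rule: lines_SucE)
    case (T1 u)
    thus ?thesis using card_image_le[of "{0..<m}" "\<lambda>i. u*l+i"] by simp
  next
    case (T2 L0 i)
    hence "L0 \<in> lines l m q f" "L = (\<lambda>u. u*l+i) ` L0" by auto
    moreover have "finite L0" using \<open>L0 \<in> lines l m q f\<close> lines_sub finite_grid
      by (meson finite_subset)
    ultimately show ?thesis using Suc.IH card_image_le[of L0 "\<lambda>u. u*l+i"] by fastforce
  qed
qed

lemma lines_per_vertex:
  assumes "m \<le> l"
  shows "card {L \<in> lines l m q f. v \<in> L} \<le> f"
proof (induction f arbitrary: v)
  case 0 thus ?case by simp
next
  case (Suc f)
  let ?A = "{L \<in> lines l m q f. v div l \<in> L}"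
  have sub: "{L \<in> lines l m q (Suc f). v \<in> L} \<subseteq>
     {(\<lambda>i. (v div l)*l+i) ` {0..<m}} \<union> (\<lambda>L. (\<lambda>u. u*l + v mod l) ` L) ` ?A"
  proof
    fix L assume L: "L \<in> {L \<in> lines l m q (Suc f). v \<in> L}"
    hence vL: "v \<in> L" by simp
    from L have "L \<in> lines l m q (Suc f)" by simp
    thus "L \<in> {(\<lambda>i. (v div l)*l+i) ` {0..<m}} \<union> (\<lambda>L. (\<lambda>u. u*l + v mod l) ` L) ` ?A"
    proof (cases rule: lines_SucE)
      case (T1 u)
      hence u: "L = (\<lambda>i. u*l+i) ` {0..<m}" by simp
      then obtain i where "i < m" "v = u*l+i" using vL by auto
      hence "u = v div l" using assms by simp
      thus ?thesis using u by simp
    next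
      case (T2 L0 i)
      hence L0: "L0 \<in> lines l m q f" "i < m" "L = (\<lambda>u. u*l+i) ` L0" by auto
      then obtain u where "u \<in> L0" "v = u*l+i" using vL by auto
      hence "u = v div l" "i = v mod l" using assms L0 by auto
      thus ?thesis using L0 \<open>u \<in> L0\<close> by auto
    qed
  qed
  have fin: "finite ?A" using finite_lines[of l m q f] by simp
  have "card {L \<in> lines l m q (Suc f). v \<in> L} \<le>
     card ({(\<lambda>i. (v div l)*l+i) ` {0..<m}} \<union> (\<lambda>L. (\<lambda>u. u*l + v mod l) ` L) ` ?A)"
    by (rule card_mono[OF _ sub]) (use fin in auto)
  also have "\<dots> \<le> 1 + card ((\<lambda>L. (\<lambda>u. u*l + v mod l) ` L) ` ?A)"
    using card_Un_le[of "{(\<lambda>i. (v div l)*l+i) ` {0..<m}}" "(\<lambda>L. (\<lambda>u. u*l + v mod l) ` L) ` ?A"] by simp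
  also have "\<dots> \<le> 1 + card ?A" using card_image_le[OF fin] by simp
  also have "\<dots> \<le> Suc f" using Suc.IH[of "v div l"] by simp
  finally show ?case .
qed

lemma strict_lines:
  assumes "m \<le> l" "0 < l"
  shows "D \<subseteq> grid l m q f \<Longrightarrow> D \<noteq> {} \<Longrightarrow> card D < 2^f \<Longrightarrow> \<exists>L\<in>lines l m q f. card (L \<inter> D) = 1"
proof (induction f arbitrary: D)
  case 0
  have "finite D" using 0 finite_subset[OF _ finite_grid] by blast
  thus ?case using 0 by simp
next
  case (Suc f)
  have finD: "finite D" using Suc.prems finite_subset[OF _ finite_grid] by blast
  define sl where "sl = (\<lambda>i. {u. u*l+i \<in> D})"
  have slg: "sl i \<subseteq> grid l m q f" if "i < m" for i
  proof
    fix u assume "u \<in> sl i"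
    hence "u*l+i \<in> grid l m q (Suc f)" using Suc.prems unfolding sl_def by auto
    then obtain u' i' where "u' \<in> grid l m q f" "i' < m" "u*l+i = u'*l+i'" by auto
    thus "u \<in> grid l m q f" using lin_inj[of i l i' u u'] that assms by auto
  qed
  have finsl: "finite (sl i)" if "i < m" for i using slg[OF that] finite_subset finite_grid by blast
  have img: "(\<lambda>u. u*l+i) ` sl i \<subseteq> D" for i unfolding sl_def by auto
  have cimg: "card ((\<lambda>u. u*l+i) ` sl i) = card (sl i)" for i
    by (rule card_image) (use assms in \<open>auto simp: inj_on_def\<close>)
  show ?case
  proof (cases "\<exists>i<m. sl i \<noteq> {} \<and> card (sl i) < 2^f")
    case True
    then obtain i where i: "i < m" "sl i \<noteq> {}" "card (sl i) < 2^f" by auto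
    obtain L0 where L0: "L0 \<in> lines l m q f" "card (L0 \<inter> sl i) = 1"
      using Suc.IH[OF slg[OF i(1)] i(2) i(3)] by blast
    define L where "L = (\<lambda>u. u*l+i) ` L0"
    have Lm: "L \<in> lines l m q (Suc f)" unfolding L_def using L0 i by auto
    have "L \<inter> D = (\<lambda>u. u*l+i) ` (L0 \<inter> sl i)" unfolding L_def sl_def by auto
    moreover have "card ((\<lambda>u. u*l+i) ` (L0 \<inter> sl i)) = card (L0 \<inter> sl i)"
      by (rule card_image) (use assms in \<open>auto simp: inj_on_def\<close>)
    ultimately have "card (L \<inter> D) = 1" using L0 by simp
    thus ?thesis using Lm by blast
  next
    case False
    hence big: "\<And>i. i < m \<Longrightarrow> sl i \<noteq> {} \<Longrightarrow> 2^f \<le> card (sl i)" by (meson not_less)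
    obtain v where v: "v \<in> D" using Suc.prems by auto
    have vg: "v \<in> (\<lambda>(u,i). u*l+i) ` (grid l m q f \<times> {0..<m})" using v Suc.prems(1) by auto
    then obtain w where w: "w \<in> grid l m q f \<times> {0..<m}" "v = (\<lambda>(u,i). u*l+i) w" by (rule imageE)
    obtain u i0 where "w = (u,i0)" by (cases w)
    hence ui: "u \<in> grid l m q f" "i0 < m" "v = u*l+i0" using w by auto
    have u0: "u \<in> sl i0" unfolding sl_def using v ui by simp
    have empty: "sl i = {}" if "i < m" "i \<noteq> i0" for i
    proof (rule ccontr)
      assume ne: "sl i \<noteq> {}"
      have disj: "(\<lambda>u. u*l+i) ` sl i \<inter> (\<lambda>u. u*l+i0) ` sl i0 = {}"
      proof (rule ccontr)
        assume "(\<lambda>u. u*l+i) ` sl i \<inter> (\<lambda>u. u*l+i0) ` sl i0 \<noteq> {}"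
        then obtain a b where "a*l+i = b*l+i0" by blast
        hence "i = i0" using lin_inj'[of i m i0 l a b] that ui assms by blast
        thus False using that by simp
      qed
      have "card ((\<lambda>u. u*l+i) ` sl i \<union> (\<lambda>u. u*l+i0) ` sl i0) \<le> card D"
        by (rule card_mono[OF finD]) (use img in auto)
      moreover have "card ((\<lambda>u. u*l+i) ` sl i \<union> (\<lambda>u. u*l+i0) ` sl i0) = card (sl i) + card (sl i0)"
        using card_Un_disjoint[OF _ _ disj] finsl that ui cimg by simp
      moreover have "2^f \<le> card (sl i)" using big that ne by simp
      moreover have "2^f \<le> card (sl i0)" using big ui u0 by blast
      ultimately show False using Suc.prems by simp
    qed
    define L where "L = (\<lambda>i. u*l+i) ` {0..<m}"
    have Lm: "L \<in> lines l m q (Suc f)" unfolding L_def using ui by auto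
    moreover have "L \<inter> D = {v}"
    proof
      show "L \<inter> D \<subseteq> {v}"
      proof
        fix x assume x: "x \<in> L \<inter> D"
        then obtain i where i: "i < m" "x = u*l+i" unfolding L_def by auto
        have "u \<in> sl i" unfolding sl_def using x i by simp
        hence "i = i0" using empty i by blast
        thus "x \<in> {v}" using i ui by simp
      qed
    next
      show "{v} \<subseteq> L \<inter> D" unfolding L_def using v ui by auto
    qed
    ultimately show ?thesis by (intro bexI[of _ L]) simp_all
  qed
qed



definition Bal :: "nat \<Rightarrow> nat set \<Rightarrow> nat set set \<Rightarrow> (nat \<Rightarrow> int) set" where
  "Bal N G Ls = {S \<in> assignments N. (\<forall>v<N. v \<notin> G \<longrightarrow> S v = -1) \<and> (\<forall>L\<in>Ls. (\<Sum>v\<in>L. S v) = 0)}"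

lemma finite_assignments: "finite (assignments N)"
  unfolding assignments_def by (simp add: finite_PiE)

lemma finite_Bal: "finite (Bal N G Ls)"
  unfolding Bal_def using finite_assignments by simp

lemma card_assignments: "card (assignments N) = 2^N"
  unfolding assignments_def by (simp add: card_PiE numeral_2_eq_2)

lemma assign_val: "S \<in> assignments N \<Longrightarrow> v < N \<Longrightarrow> S v = 1 \<or> S v = -1"
  unfolding assignments_def by (auto simp: PiE_def Pi_def)

lemma assign_undef: "S \<in> assignments N \<Longrightarrow> \<not> v < N \<Longrightarrow> S v = undefined"
  unfolding assignments_def by (auto simp: PiE_def extensional_def)

lemma assignmentsI:
  assumes "\<And>v. v < N \<Longrightarrow> S v = 1 \<or> S v = -1" "\<And>v. \<not> v < N \<Longrightarrow> S v = undefined"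
  shows "S \<in> assignments N"
  unfolding assignments_def using assms by (auto simp: PiE_def Pi_def extensional_def)

abbreviation BalG where "BalG l m q f \<equiv> Bal (q*l^f) (grid l m q f) (lines l m q f)"

lemma Bal0: "BalG l m q 0 = assignments q"
  unfolding Bal_def by auto

lemma Bal_step:
  assumes ml: "m \<le> l" and l0: "0 < l"
  shows "card {A \<in> {0..<m} \<rightarrow>\<^sub>E BalG l m q f. \<forall>x\<in>grid l m q f. (\<Sum>i<m. A i x) = 0}
     \<le> card (BalG l m q (Suc f))"
proof -
  define N where "N = q*l^f"
  define N' where "N' = q*l^Suc f"
  have N'N: "N' = N*l" unfolding N_def N'_def by simp
  define Z where "Z = {A \<in> {0..<m} \<rightarrow>\<^sub>E BalG l m q f. \<forall>x\<in>grid l m q f. (\<Sum>i<m. A i x) = 0}"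
  define Psi where "Psi = (\<lambda>A::nat \<Rightarrow> nat \<Rightarrow> int. \<lambda>v\<in>{0..<N'}. if v mod l < m then A (v mod l) (v div l) else -1)"
  have AiB: "A i \<in> BalG l m q f" if "A \<in> Z" "i < m" for A i
    using that unfolding Z_def by auto
  have AiA: "A i \<in> assignments N" if "A \<in> Z" "i < m" for A i
    using AiB[OF that] unfolding Bal_def N_def by auto
  have divN: "v div l < N" if "v < N'" for v
    using that l0 unfolding N'N by (simp add: div_less_iff_less_mult)
  have lin_lt: "u*l+i < N'" if "u < N" "i < l" for u i
  proof -
    have "u*l+i < (u+1)*l" using that by simp
    also have "\<dots> \<le> N*l" using that by (intro mult_right_mono) auto
    finally show ?thesis unfolding N'N .
  qed
  have Psi_lin: "Psi A (u*l+i) = A i u" if "u < N" "i < m" for A u i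
    using that ml lin_lt[of u i] unfolding Psi_def by auto
  have gb: "grid l m q f \<subseteq> {0..<N}" using grid_bound[OF ml] unfolding N_def by simp
  have "inj_on Psi Z"
  proof (rule inj_onI)
    fix A B assume A: "A \<in> Z" and B: "B \<in> Z" and e: "Psi A = Psi B"
    show "A = B"
    proof
      fix i show "A i = B i"
      proof (cases "i < m")
        case True
        show ?thesis
        proof
          fix u show "A i u = B i u"
          proof (cases "u < N")
            case True
            thus ?thesis using Psi_lin[OF True \<open>i < m\<close>, of A] Psi_lin[OF True \<open>i < m\<close>, of B] e by simp
          next
            case False
            thus ?thesis using assign_undef[OF AiA[OF A \<open>i<m\<close>]] assign_undef[OF AiA[OF B \<open>i<m\<close>]] by simp
          qed
        qed
      next
        case False
        thus ?thesis using A B unfolding Z_def by (auto simp: PiE_def extensional_def)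
      qed
    qed
  qed
  moreover have "Psi ` Z \<subseteq> BalG l m q (Suc f)"
  proof
    fix S assume "S \<in> Psi ` Z"
    then obtain A where A: "A \<in> Z" and S: "S = Psi A" by auto
    have "S \<in> assignments N'"
    proof (rule assignmentsI)
      fix v assume v: "v < N'"
      show "S v = 1 \<or> S v = -1"
      proof (cases "v mod l < m")
        case True
        thus ?thesis using assign_val[OF AiA[OF A True] divN[OF v]] v unfolding S Psi_def by simp
      next
        case False thus ?thesis using v unfolding S Psi_def by simp
      qed
    next
      fix v assume "\<not> v < N'" thus "S v = undefined" unfolding S Psi_def by simp
    qed
    moreover have "\<forall>v<N'. v \<notin> grid l m q (Suc f) \<longrightarrow> S v = -1"
    proof (intro allI impI)
      fix v assume v: "v < N'" and ng: "v \<notin> grid l m q (Suc f)"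
      show "S v = -1"
      proof (cases "v mod l < m")
        case True
        have "v div l \<notin> grid l m q f"
        proof
          assume "v div l \<in> grid l m q f"
          hence "(v div l)*l + v mod l \<in> grid l m q (Suc f)" using True
            by (auto intro!: image_eqI[where x="(v div l, v mod l)"])
          thus False using ng by simp
        qed
        hence "A (v mod l) (v div l) = -1"
          using AiB[OF A True] divN[OF v] unfolding Bal_def N_def by auto
        thus ?thesis using True v unfolding S Psi_def by simp
      next
        case False thus ?thesis using v unfolding S Psi_def by simp
      qed
    qed
    moreover have "\<forall>L\<in>lines l m q (Suc f). (\<Sum>v\<in>L. S v) = 0"
    proof
      fix L assume "L \<in> lines l m q (Suc f)"
      thus "(\<Sum>v\<in>L. S v) = 0"
      proof (cases rule: lines_SucE)
        case (T1 u)
        have uN: "u < N" using T1 gb by auto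
        have "(\<Sum>v\<in>L. S v) = (\<Sum>i\<in>{0..<m}. S (u*l+i))"
          unfolding T1 by (subst sum.reindex) (auto simp: inj_on_def)
        also have "\<dots> = (\<Sum>i<m. A i u)"
          using Psi_lin[OF uN] unfolding S by (simp add: atLeast0LessThan)
        also have "\<dots> = 0" using A T1 unfolding Z_def by auto
        finally show ?thesis .
      next
        case (T2 L0 i)
        have L0g: "L0 \<subseteq> grid l m q f" using lines_sub[OF T2(1)] .
        have "(\<Sum>v\<in>L. S v) = (\<Sum>u\<in>L0. S (u*l+i))"
          unfolding T2 using l0 by (subst sum.reindex) (auto simp: inj_on_def)
        also have "\<dots> = (\<Sum>u\<in>L0. A i u)"
          using Psi_lin T2 L0g gb unfolding S by (intro sum.cong) auto
        also have "\<dots> = 0" using AiB[OF A T2(2)] T2(1) unfolding Bal_def by auto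
        finally show ?thesis .
      qed
    qed
    ultimately show "S \<in> BalG l m q (Suc f)" unfolding Bal_def N'_def by simp
  qed
  ultimately show ?thesis unfolding Z_def[symmetric]
    using card_inj_on_le finite_Bal by blast
qed

lemma Bal_count_step:
  assumes ml: "m \<le> l" and l0: "0 < l" and m: "m = 2*p" and p: "p > 0"
  shows "real (card (BalG l m q f)) ^ m * (kappa / sqrt m) ^ (q * m^f) \<le> real (card (BalG l m q (Suc f)))"
proof -
  define N where "N = q*l^f"
  define neg where "neg = (\<lambda>(S::nat \<Rightarrow> int) v. if v \<in> grid l m q f then - S v else S v)"
  have gb: "grid l m q f \<subseteq> {0..<N}" using grid_bound[OF ml] unfolding N_def by simp
  have pm: "\<forall>S\<in>BalG l m q f. \<forall>x\<in>grid l m q f. S x = 1 \<or> S x = -1"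
    using assign_val gb unfolding Bal_def N_def[symmetric] by fastforce
  have negp: "\<forall>S\<in>BalG l m q f. neg S \<in> BalG l m q f \<and> neg (neg S) = S \<and> (\<forall>x\<in>grid l m q f. neg S x = - S x)"
  proof
    fix S assume S: "S \<in> BalG l m q f"
    have SA: "S \<in> assignments N" using S unfolding Bal_def N_def by simp
    have "neg S \<in> assignments N"
    proof (rule assignmentsI)
      fix v assume "v < N" thus "neg S v = 1 \<or> neg S v = -1" using assign_val[OF SA] unfolding neg_def by auto
    next
      fix v assume "\<not> v < N" thus "neg S v = undefined" using assign_undef[OF SA] gb unfolding neg_def by auto
    qed
    moreover have "\<forall>v<N. v \<notin> grid l m q f \<longrightarrow> neg S v = -1" using S unfolding neg_def Bal_def N_def by auto
    moreover have "\<forall>L\<in>lines l m q f. (\<Sum>v\<in>L. neg S v) = 0"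
    proof
      fix L assume L: "L \<in> lines l m q f"
      have "(\<Sum>v\<in>L. neg S v) = (\<Sum>v\<in>L. - S v)" using lines_sub[OF L] unfolding neg_def by (intro sum.cong) auto
      also have "\<dots> = 0" using S L unfolding Bal_def by (simp add: sum_negf)
      finally show "(\<Sum>v\<in>L. neg S v) = 0" .
    qed
    ultimately have "neg S \<in> BalG l m q f" unfolding Bal_def N_def by simp
    moreover have "neg (neg S) = S" unfolding neg_def by auto
    ultimately show "neg S \<in> BalG l m q f \<and> neg (neg S) = S \<and> (\<forall>x\<in>grid l m q f. neg S x = - S x)"
      unfolding neg_def by auto
  qed
  have "real (card (BalG l m q f)) ^ m * (kappa / sqrt m) ^ card (grid l m q f)
      \<le> real (card {A \<in> {0..<m} \<rightarrow>\<^sub>E BalG l m q f. \<forall>x\<in>grid l m q f. (\<Sum>i<m. A i x) = 0})"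
    by (rule count_zero_sum[OF finite_Bal finite_grid pm negp m p])
  also have "\<dots> \<le> real (card (BalG l m q (Suc f)))" using Bal_step[OF ml l0] by simp
  finally show ?thesis using card_grid[OF ml] by simp
qed

lemma Bal_count:
  assumes ml: "m \<le> l" and l0: "0 < l" and m: "m = 2*p" and p: "p > 0"
  shows "2 powr (real q * real m ^ f * (1 + real f * log 2 (kappa / sqrt m) / m)) \<le> real (card (BalG l m q f))"
proof (induction f)
  case 0
  show ?case using Bal0 card_assignments by (simp add: powr_realpow)
next
  case (Suc f)
  define lam where "lam = log 2 (kappa / sqrt m)"
  define E where "E = real q * real m ^ f * (1 + real f * lam / m)"
  have m0: "real m > 0" using m p by simp
  have rho: "kappa / sqrt m = 2 powr lam" unfolding lam_def using kappa_pos m0 by simp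
  have "2 powr (real q * real m ^ Suc f * (1 + real (Suc f) * lam / m)) = 2 powr (m * E + (q * m^f) * lam)"
  proof -
    have "real q * real m ^ Suc f * (1 + real (Suc f) * lam / m) = m * E + (q * m^f) * lam"
      unfolding E_def using m0 by (simp add: field_simps)
    thus ?thesis by simp
  qed
  also have "\<dots> = (2 powr E) ^ m * (kappa / sqrt m) ^ (q * m^f)"
    unfolding rho by (simp add: powr_power powr_add mult.commute)
  also have "\<dots> \<le> real (card (BalG l m q f)) ^ m * (kappa / sqrt m) ^ (q * m^f)"
    using Suc.IH unfolding E_def lam_def using kappa_pos
    by (intro mult_right_mono power_mono) auto
  also have "\<dots> \<le> real (card (BalG l m q (Suc f)))" by (rule Bal_count_step[OF ml l0 m p])
  finally show ?case unfolding lam_def .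
qed



definition Jof :: "nat set set \<Rightarrow> nat \<Rightarrow> nat \<Rightarrow> int" where
  "Jof Ls i j = (if i = j then 0 else int (card {L\<in>Ls. i\<in>L \<and> j\<in>L}))"

definition hof :: "nat set \<Rightarrow> nat \<Rightarrow> int" where
  "hof G v = (if v \<in> G then 0 else 1)"

lemma sq_pairs:
  fixes x :: "nat \<Rightarrow> int"
  assumes fin: "finite A"
  shows "(\<Sum>a\<in>A. x a)^2 = (\<Sum>a\<in>A. (x a)^2) + 2 * (\<Sum>(a,b)\<in>{(a,b). a\<in>A \<and> b\<in>A \<and> a<b}. x a * x b)"
proof -
  define g where "g = (\<lambda>(a,b). x a * x b)"
  define Dg where "Dg = {p\<in>A\<times>A. fst p = snd p}"
  define Lt where "Lt = {(a,b). a\<in>A \<and> b\<in>A \<and> a<b}"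
  define Gt where "Gt = {p\<in>A\<times>A. snd p < fst p}"
  have finAA: "finite (A\<times>A)" using fin by simp
  have fD: "finite Dg" "finite Lt" "finite Gt"
    unfolding Dg_def Lt_def Gt_def by (auto intro: finite_subset[OF _ finAA])
  have "(\<Sum>a\<in>A. x a)^2 = (\<Sum>a\<in>A. \<Sum>b\<in>A. x a * x b)"
    by (simp add: power2_eq_square sum_product)
  also have "\<dots> = (\<Sum>p\<in>A\<times>A. g p)"
    unfolding g_def by (simp add: sum.cartesian_product)
  also have "A\<times>A = Dg \<union> Lt \<union> Gt" unfolding Dg_def Lt_def Gt_def by auto
  also have "(\<Sum>p\<in>Dg \<union> Lt \<union> Gt. g p) = (\<Sum>p\<in>Dg. g p) + (\<Sum>p\<in>Lt. g p) + (\<Sum>p\<in>Gt. g p)"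
    using fD by (subst sum.union_disjoint, auto simp: Dg_def Lt_def Gt_def, subst sum.union_disjoint, auto)
  also have "(\<Sum>p\<in>Dg. g p) = (\<Sum>a\<in>A. (x a)^2)"
  proof -
    have "Dg = (\<lambda>a. (a,a)) ` A" unfolding Dg_def by auto
    thus ?thesis unfolding g_def by (simp add: sum.reindex inj_on_def power2_eq_square)
  qed
  also have "(\<Sum>p\<in>Gt. g p) = (\<Sum>p\<in>Lt. g p)"
  proof -
    have "Gt = prod.swap ` Lt" unfolding Gt_def Lt_def by auto
    hence "(\<Sum>p\<in>Gt. g p) = (\<Sum>p\<in>Lt. g (prod.swap p))" by (simp add: sum.reindex)
    also have "\<dots> = (\<Sum>p\<in>Lt. g p)" unfolding g_def by (intro sum.cong) auto
    finally show ?thesis .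
  qed
  finally show ?thesis unfolding Lt_def g_def by simp
qed

lemma card_filter_sum:
  assumes "finite Ls"
  shows "int (card {L\<in>Ls. P L}) = (\<Sum>L\<in>Ls. if P L then 1 else 0)"
  using assms by (simp add: sum.If_cases Int_def)

lemma pair_identity:
  fixes S :: "nat \<Rightarrow> int"
  assumes finLs: "finite Ls" and sub: "\<forall>L\<in>Ls. L \<subseteq> {..<N}"
    and pm: "\<forall>v<N. S v = 1 \<or> S v = -1"
  shows "2 * (\<Sum>(i,j)\<in>{(i,j). i < j \<and> j < N}. Jof Ls i j * S i * S j)
       = (\<Sum>L\<in>Ls. (\<Sum>v\<in>L. S v)^2 - int (card L))"
proof -
  define PN where "PN = {(i,j). i < j \<and> j < (N::nat)}"
  have finPN: "finite PN" unfolding PN_def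
    by (rule finite_subset[of _ "{..<N} \<times> {..<N}"]) auto
  have t1: "Jof Ls i j * S i * S j = (\<Sum>L\<in>Ls. if i\<in>L \<and> j\<in>L then S i * S j else 0)"
    if "(i,j) \<in> PN" for i j
  proof -
    have "i \<noteq> j" using that unfolding PN_def by simp
    hence "Jof Ls i j = (\<Sum>L\<in>Ls. if i\<in>L \<and> j\<in>L then 1 else 0)"
      unfolding Jof_def using card_filter_sum[OF finLs] by simp
    hence "Jof Ls i j * S i * S j = (\<Sum>L\<in>Ls. if i\<in>L \<and> j\<in>L then 1 else 0) * (S i * S j)"
      by (simp add: mult.assoc)
    also have "\<dots> = (\<Sum>L\<in>Ls. (if i\<in>L \<and> j\<in>L then 1 else 0) * (S i * S j))"
      by (rule sum_distrib_right)
    also have "\<dots> = (\<Sum>L\<in>Ls. if i\<in>L \<and> j\<in>L then S i * S j else 0)"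
      by (intro sum.cong) auto
    finally show ?thesis .
  qed
  have t2: "(\<Sum>(i,j)\<in>PN. if i\<in>L \<and> j\<in>L then S i * S j else 0)
        = (\<Sum>(a,b)\<in>{(a,b). a\<in>L \<and> b\<in>L \<and> a<b}. S a * S b)" if L: "L \<in> Ls" for L
  proof -
    have "{(a,b). a\<in>L \<and> b\<in>L \<and> a<b} = {p\<in>PN. fst p \<in> L \<and> snd p \<in> L}"
      using sub L unfolding PN_def by auto
    hence "(\<Sum>(a,b)\<in>{(a,b). a\<in>L \<and> b\<in>L \<and> a<b}. S a * S b)
        = (\<Sum>p\<in>PN. if fst p \<in> L \<and> snd p \<in> L then S (fst p) * S (snd p) else 0)"
      using finPN by (simp add: sum.inter_filter case_prod_beta)
    thus ?thesis by (simp add: case_prod_beta)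
  qed
  have t3: "(\<Sum>v\<in>L. S v)^2 - int (card L) = 2 * (\<Sum>(a,b)\<in>{(a,b). a\<in>L \<and> b\<in>L \<and> a<b}. S a * S b)"
    if L: "L \<in> Ls" for L
  proof -
    have finL: "finite L" using sub L finite_subset by blast
    have "(\<Sum>v\<in>L. (S v)^2) = (\<Sum>v\<in>L. 1)"
      using sub L pm by (intro sum.cong) (auto simp: subset_iff, fastforce+)
    thus ?thesis using sq_pairs[OF finL, of S] by simp
  qed
  have "(\<Sum>(i,j)\<in>PN. Jof Ls i j * S i * S j) = (\<Sum>(i,j)\<in>PN. \<Sum>L\<in>Ls. if i\<in>L \<and> j\<in>L then S i * S j else 0)"
    using t1 by (intro sum.cong) auto
  also have "\<dots> = (\<Sum>L\<in>Ls. \<Sum>(i,j)\<in>PN. if i\<in>L \<and> j\<in>L then S i * S j else 0)"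
    by (simp add: case_prod_beta sum.swap[of _ PN])
  also have "\<dots> = (\<Sum>L\<in>Ls. \<Sum>(a,b)\<in>{(a,b). a\<in>L \<and> b\<in>L \<and> a<b}. S a * S b)"
    by (rule sum.cong[OF refl]) (rule t2)
  finally have "2 * (\<Sum>(i,j)\<in>PN. Jof Ls i j * S i * S j) = (\<Sum>L\<in>Ls. 2 * (\<Sum>(a,b)\<in>{(a,b). a\<in>L \<and> b\<in>L \<and> a<b}. S a * S b))"
    by (simp add: sum_distrib_left)
  also have "\<dots> = (\<Sum>L\<in>Ls. (\<Sum>v\<in>L. S v)^2 - int (card L))"
    using t3 by (intro sum.cong) auto
  finally show ?thesis unfolding PN_def .
qed

lemma energy_formula:
  assumes finLs: "finite Ls" and sub: "\<forall>L\<in>Ls. L \<subseteq> G" and GN: "G \<subseteq> {..<N}" and S: "S \<in> assignments N"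
  shows "energy N (hof G) (Jof Ls) S =
     (1/4) * (\<Sum>v\<in>{..<N}-G. real_of_int (S v)) + (1/8) * (\<Sum>L\<in>Ls. real_of_int ((\<Sum>v\<in>L. S v)^2 - int (card L)))"
proof -
  have pm: "\<forall>v<N. S v = 1 \<or> S v = -1" using assign_val[OF S] by blast
  have sub': "\<forall>L\<in>Ls. L \<subseteq> {..<N}" using sub GN by blast
  have h: "(\<Sum>i<N. real_of_int (hof G i * S i)) = (\<Sum>v\<in>{..<N}-G. real_of_int (S v))"
  proof -
    have "(\<Sum>i<N. real_of_int (hof G i * S i)) = (\<Sum>i\<in>{..<N}. if i \<notin> G then real_of_int (S i) else 0)"
      unfolding hof_def by (intro sum.cong) auto
    also have "\<dots> = (\<Sum>v\<in>{..<N}-G. real_of_int (S v))"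
      by (simp add: sum.inter_filter[symmetric] set_diff_eq)
    finally show ?thesis .
  qed
  have p: "(\<Sum>(i,j)\<in>{(i,j). i < j \<and> j < N}. real_of_int (Jof Ls i j * S i * S j))
       = (1/2) * (\<Sum>L\<in>Ls. real_of_int ((\<Sum>v\<in>L. S v)^2 - int (card L)))"
  proof -
    have "(\<Sum>(i,j)\<in>{(i,j). i < j \<and> j < N}. real_of_int (Jof Ls i j * S i * S j))
        = real_of_int (\<Sum>(i,j)\<in>{(i,j). i < j \<and> j < N}. Jof Ls i j * S i * S j)"
      by (simp add: of_int_sum case_prod_beta)
    also have "\<dots> = real_of_int (2 * (\<Sum>(i,j)\<in>{(i,j). i < j \<and> j < N}. Jof Ls i j * S i * S j)) / 2"
      by simp
    also have "\<dots> = real_of_int (\<Sum>L\<in>Ls. (\<Sum>v\<in>L. S v)^2 - int (card L)) / 2"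
      using pair_identity[OF finLs sub' pm] by simp
    also have "\<dots> = (1/2) * (\<Sum>L\<in>Ls. real_of_int ((\<Sum>v\<in>L. S v)^2 - int (card L)))"
      by (simp only: of_int_sum)
    finally show ?thesis .
  qed
  show ?thesis unfolding energy_def h p by simp
qed

definition E0 :: "nat \<Rightarrow> nat set \<Rightarrow> nat set set \<Rightarrow> real" where
  "E0 N G Ls = - (1/4) * card ({..<N}-G) - (1/8) * (\<Sum>L\<in>Ls. real (card L))"

lemma energy_E0:
  assumes finLs: "finite Ls" and sub: "\<forall>L\<in>Ls. L \<subseteq> G" and GN: "G \<subseteq> {..<N}" and S: "S \<in> assignments N"
  shows "E0 N G Ls \<le> energy N (hof G) (Jof Ls) S"
    and "energy N (hof G) (Jof Ls) S = E0 N G Ls \<longleftrightarrow> S \<in> Bal N G Ls"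
proof -
  define a where "a = (\<Sum>v\<in>{..<N}-G. real_of_int (S v) + 1)"
  define b where "b = (\<Sum>L\<in>Ls. real_of_int ((\<Sum>v\<in>L. S v)^2))"
  have finV: "finite ({..<N}-G)" by simp
  have a_nn: "\<forall>v\<in>{..<N}-G. real_of_int (S v) + 1 \<ge> 0"
    using assign_val[OF S] by fastforce
  have b_nn: "\<forall>L\<in>Ls. real_of_int ((\<Sum>v\<in>L. S v)^2) \<ge> 0" by simp
  have eq: "energy N (hof G) (Jof Ls) S = E0 N G Ls + (1/4) * a + (1/8) * b"
  proof -
    have X: "(\<Sum>v\<in>{..<N}-G. real_of_int (S v)) = a - card ({..<N}-G)"
      unfolding a_def by (simp add: sum.distrib)
    have Y: "(\<Sum>L\<in>Ls. real_of_int ((\<Sum>v\<in>L. S v)^2 - int (card L))) = b - (\<Sum>L\<in>Ls. real (card L))"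
      unfolding b_def by (simp add: sum_subtractf)
    have F: "energy N (hof G) (Jof Ls) S =
     (1/4) * (\<Sum>v\<in>{..<N}-G. real_of_int (S v)) + (1/8) * (\<Sum>L\<in>Ls. real_of_int ((\<Sum>v\<in>L. S v)^2 - int (card L)))"
      by (rule energy_formula[OF assms])
    show ?thesis unfolding E0_def using F X Y by linarith
  qed
  have a0: "a \<ge> 0" unfolding a_def using a_nn by (intro sum_nonneg) auto
  have b0: "b \<ge> 0" unfolding b_def by (intro sum_nonneg) auto
  show "E0 N G Ls \<le> energy N (hof G) (Jof Ls) S" using eq a0 b0 by simp
  have c1: "energy N (hof G) (Jof Ls) S = E0 N G Ls \<longleftrightarrow> a = 0 \<and> b = 0"
  proof
    assume "energy N (hof G) (Jof Ls) S = E0 N G Ls"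
    hence "(1/4) * a + (1/8) * b = 0" using eq by linarith
    thus "a = 0 \<and> b = 0" using a0 b0 by linarith
  next
    assume "a = 0 \<and> b = 0" thus "energy N (hof G) (Jof Ls) S = E0 N G Ls" using eq by simp
  qed
  have c2: "a = 0 \<longleftrightarrow> (\<forall>v<N. v \<notin> G \<longrightarrow> S v = -1)"
  proof -
    have "a = 0 \<longleftrightarrow> (\<forall>v\<in>{..<N}-G. real_of_int (S v) + 1 = 0)"
      using sum_nonneg_eq_0_iff[OF finV, of "\<lambda>v. real_of_int (S v) + 1"] a_nn unfolding a_def by simp
    also have "\<dots> \<longleftrightarrow> (\<forall>v\<in>{..<N}-G. S v = -1)"
    proof -
      have r: "(real_of_int x + 1 = 0) \<longleftrightarrow> x = -1" for x :: int
      proof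
        assume "real_of_int x + 1 = 0" hence "real_of_int x = real_of_int (-1)" by simp
        thus "x = -1" by (simp only: of_int_eq_iff)
      qed simp
      show ?thesis using r by simp
    qed
    also have "\<dots> \<longleftrightarrow> (\<forall>v<N. v \<notin> G \<longrightarrow> S v = -1)" by auto
    finally show ?thesis .
  qed
  have c3: "b = 0 \<longleftrightarrow> (\<forall>L\<in>Ls. (\<Sum>v\<in>L. S v) = 0)"
  proof -
    have "b = 0 \<longleftrightarrow> (\<forall>L\<in>Ls. real_of_int ((\<Sum>v\<in>L. S v)^2) = 0)"
      using sum_nonneg_eq_0_iff[OF finLs, of "\<lambda>L. real_of_int ((\<Sum>v\<in>L. S v)^2)"] b_nn unfolding b_def by simp
    also have "\<dots> \<longleftrightarrow> (\<forall>L\<in>Ls. (\<Sum>v\<in>L. S v) = 0)" by (simp only: of_int_eq_0_iff zero_eq_power2)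
    finally show ?thesis .
  qed
  show "energy N (hof G) (Jof Ls) S = E0 N G Ls \<longleftrightarrow> S \<in> Bal N G Ls"
    unfolding Bal_def c1 c2 c3 using S by blast
qed

lemma ising_abstract:
  assumes finLs: "finite Ls" and sub: "\<forall>L\<in>Ls. L \<subseteq> G" and GN: "G \<subseteq> {..<N}"
    and cardL: "\<forall>L\<in>Ls. card L \<le> m" and deg: "\<forall>v. card {L\<in>Ls. v\<in>L} \<le> f"
    and ne: "Bal N G Ls \<noteq> {}"
    and strict: "\<forall>D. D \<subseteq> G \<longrightarrow> D \<noteq> {} \<longrightarrow> card D \<le> k \<longrightarrow> (\<exists>L\<in>Ls. card (L \<inter> D) = 1)"
  shows "ising_instance N (hof G) (Jof Ls)"
    and "\<forall>i<N. vertex_degree N (Jof Ls) i \<le> f*(m-1)"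
    and "{A. global_min N (hof G) (Jof Ls) A} = Bal N G Ls"
    and "\<forall>A. global_min N (hof G) (Jof Ls) A \<longrightarrow> k_minimum N (hof G) (Jof Ls) k A"
proof -
  show "ising_instance N (hof G) (Jof Ls)"
    unfolding ising_instance_def Jof_def by (auto simp: conj_commute)
  show "\<forall>i<N. vertex_degree N (Jof Ls) i \<le> f*(m-1)"
  proof (intro allI impI)
    fix i assume "i < N"
    define I where "I = {L\<in>Ls. i\<in>L}"
    have finI: "finite I" unfolding I_def using finLs by simp
    have finL: "finite L" if "L \<in> Ls" for L using sub GN that finite_subset by (meson finite_lessThan order_trans)
    have "{j. j < N \<and> j \<noteq> i \<and> Jof Ls i j \<noteq> 0} \<subseteq> (\<Union>L\<in>I. L - {i})"
    proof
      fix j assume j: "j \<in> {j. j < N \<and> j \<noteq> i \<and> Jof Ls i j \<noteq> 0}"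
      hence "card {L\<in>Ls. i\<in>L \<and> j\<in>L} \<noteq> 0" unfolding Jof_def by auto
      then obtain L where "L \<in> Ls" "i \<in> L" "j \<in> L" by (metis (no_types, lifting) card.empty empty_Collect_eq)
      thus "j \<in> (\<Union>L\<in>I. L - {i})" using j unfolding I_def by auto
    qed
    hence "vertex_degree N (Jof Ls) i \<le> card (\<Union>L\<in>I. L - {i})"
      unfolding vertex_degree_def using finI finL unfolding I_def by (intro card_mono) auto
    also have "\<dots> \<le> (\<Sum>L\<in>I. card (L - {i}))" by (rule card_UN_le[OF finI])
    also have "\<dots> \<le> (\<Sum>L\<in>I. m - 1)"
    proof (rule sum_mono)
      fix L assume "L \<in> I"
      hence "L \<in> Ls" "i \<in> L" unfolding I_def by auto
      thus "card (L - {i}) \<le> m - 1" using cardL finL by (simp add: card_Diff_singleton diff_le_mono)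
    qed
    also have "\<dots> = card I * (m - 1)" by simp
    also have "\<dots> \<le> f * (m - 1)" using deg unfolding I_def by (intro mult_right_mono) auto
    finally show "vertex_degree N (Jof Ls) i \<le> f*(m-1)" .
  qed
  have GM: "{A. global_min N (hof G) (Jof Ls) A} = Bal N G Ls"
  proof
    show "{A. global_min N (hof G) (Jof Ls) A} \<subseteq> Bal N G Ls"
    proof
      fix A assume "A \<in> {A. global_min N (hof G) (Jof Ls) A}"
      hence A: "A \<in> assignments N" "\<forall>S\<in>assignments N. energy N (hof G) (Jof Ls) A \<le> energy N (hof G) (Jof Ls) S"
        unfolding global_min_def by auto
      obtain B where B: "B \<in> Bal N G Ls" using ne by auto
      have BA: "B \<in> assignments N" using B unfolding Bal_def by auto
      have "energy N (hof G) (Jof Ls) B = E0 N G Ls" using energy_E0(2)[OF finLs sub GN BA] B by simp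
      hence "energy N (hof G) (Jof Ls) A = E0 N G Ls"
        using A BA energy_E0(1)[OF finLs sub GN A(1)] by force
      thus "A \<in> Bal N G Ls" using energy_E0(2)[OF finLs sub GN A(1)] by simp
    qed
  next
    show "Bal N G Ls \<subseteq> {A. global_min N (hof G) (Jof Ls) A}"
    proof
      fix A assume A: "A \<in> Bal N G Ls"
      have AA: "A \<in> assignments N" using A unfolding Bal_def by auto
      have "energy N (hof G) (Jof Ls) A = E0 N G Ls" using energy_E0(2)[OF finLs sub GN AA] A by simp
      thus "A \<in> {A. global_min N (hof G) (Jof Ls) A}"
        unfolding global_min_def using AA energy_E0(1)[OF finLs sub GN] by auto
    qed
  qed
  show "{A. global_min N (hof G) (Jof Ls) A} = Bal N G Ls" by (rule GM)
  show "\<forall>A. global_min N (hof G) (Jof Ls) A \<longrightarrow> k_minimum N (hof G) (Jof Ls) k A"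
  proof (intro allI impI)
    fix A assume "global_min N (hof G) (Jof Ls) A"
    hence A: "A \<in> Bal N G Ls" using GM by auto
    have AA: "A \<in> assignments N" using A unfolding Bal_def by auto
    have eA: "energy N (hof G) (Jof Ls) A = E0 N G Ls" using energy_E0(2)[OF finLs sub GN AA] A by simp
    have "energy N (hof G) (Jof Ls) A < energy N (hof G) (Jof Ls) S"
      if S: "S \<in> assignments N" and h1: "1 \<le> hamming N A S" and h2: "hamming N A S \<le> k" for S
    proof -
      define D where "D = {i. i < N \<and> A i \<noteq> S i}"
      have cD: "card D \<ge> 1" "card D \<le> k" using h1 h2 unfolding hamming_def D_def by auto
      have Dne: "D \<noteq> {}" using cD by auto
      have "S \<notin> Bal N G Ls"
      proof (cases "D \<subseteq> G")
        case False
        then obtain v where v: "v < N" "A v \<noteq> S v" "v \<notin> G" unfolding D_def by auto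
        have "A v = -1" using A v unfolding Bal_def by auto
        thus ?thesis using v unfolding Bal_def by auto
      next
        case True
        obtain L where L: "L \<in> Ls" "card (L \<inter> D) = 1" using strict True Dne cD by blast
        then obtain v where v: "L \<inter> D = {v}" by (meson card_1_singletonE)
        have LN: "L \<subseteq> {..<N}" using sub GN L by blast
        have finL: "finite L" using LN finite_subset by blast
        have s1: "(\<Sum>x\<in>L. S x - A x) = (\<Sum>x\<in>L \<inter> D. S x - A x) + (\<Sum>x\<in>L - D. S x - A x)"
          using finL by (rule sum.Int_Diff)
        have s2: "(\<Sum>x\<in>L - D. S x - A x) = 0"
          using LN unfolding D_def by (intro sum.neutral) auto
        have s3: "(\<Sum>x\<in>L \<inter> D. S x - A x) = S v - A v" using v by simp
        have d: "(\<Sum>x\<in>L. S x) - (\<Sum>x\<in>L. A x) = S v - A v" using s1 s2 s3 by (simp add: sum_subtractf)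
        have "v \<in> D" using v by auto
        hence "S v \<noteq> A v" unfolding D_def by auto
        moreover have "(\<Sum>x\<in>L. A x) = 0" using A L unfolding Bal_def by auto
        ultimately have "(\<Sum>x\<in>L. S x) \<noteq> 0" using d by simp
        thus ?thesis using L unfolding Bal_def by auto
      qed
      hence "energy N (hof G) (Jof Ls) S \<noteq> E0 N G Ls" using energy_E0(2)[OF finLs sub GN S] by simp
      thus ?thesis using eA energy_E0(1)[OF finLs sub GN S] by simp
    qed
    thus "k_minimum N (hof G) (Jof Ls) k A" unfolding k_minimum_def using AA by auto
  qed
qed



lemma bern_aux:
  fixes l :: real assumes l1: "1 \<le> l"
  shows "l^(Suc n) - real (Suc n) * l^n \<le> (l-1)^(Suc n)"
proof (induction n)
  case 0 thus ?case by simp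
next
  case (Suc n)
  have l1': "l - 1 \<ge> 0" using l1 by simp
  have a: "(l-1) * (l^(Suc n) - real (Suc n) * l^n) \<le> (l-1) * (l-1)^(Suc n)"
    using Suc.IH l1' by (rule mult_left_mono)
  have b: "(l-1) * (l^(Suc n) - real (Suc n) * l^n)
      = l^(Suc (Suc n)) - real (Suc (Suc n)) * l^(Suc n) + real (Suc n) * l^n"
    by (simp add: algebra_simps)
  have c: "real (Suc n) * l^n \<ge> 0" using l1 by simp
  have d: "(l-1)^(Suc (Suc n)) = (l-1) * (l-1)^(Suc n)" by simp
  show ?case using a b c d by linarith
qed

lemma exponent_ineq:
  fixes l m lam lamL T :: real and g :: nat
  assumes m2: "2 \<le> m" and ml: "m \<le> l" and lm: "l - 1 \<le> m" and lam0: "lam \<le> 0"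
    and lamL: "lamL \<le> lam" and T: "1 - lamL \<le> T"
  shows "l^(Suc g) * (1 - real (Suc g) * T / l) \<le> m^(Suc g) * (1 + real (Suc g) * lam / m)"
proof -
  define F where "F = real (Suc g)"
  have F0: "F > 0" unfolding F_def by simp
  have l0: "l > 0" using m2 ml by simp
  have m0: "m > 0" using m2 by simp
  have A: "l^(Suc g) - F * l^g \<le> m^(Suc g)"
  proof -
    have "l^(Suc g) - F * l^g \<le> (l-1)^(Suc g)" unfolding F_def by (rule bern_aux) (use m2 ml in simp)
    also have "\<dots> \<le> m^(Suc g)" by (rule power_mono) (use lm m2 ml in auto)
    finally show ?thesis .
  qed
  have mg: "m^g \<le> l^g" by (rule power_mono) (use ml m0 in auto)
  have B: "l^g * lam \<le> m^g * lam" using mg lam0 by (rule mult_right_mono_neg)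
  have C: "l^g * lamL \<le> l^g * lam" using lamL l0 by simp
  have D: "l^g * (1 - lamL) \<le> l^g * T" using T l0 by simp
  have B': "F * (l^g * lam) \<le> F * (m^g * lam)" using B F0 by simp
  have C': "F * (l^g * lamL) \<le> F * (l^g * lam)" using C F0 by simp
  have D': "F * (l^g * (1 - lamL)) \<le> F * (l^g * T)" using D F0 by simp
  have L: "l^(Suc g) * (1 - F * T / l) = l^(Suc g) - F * (l^g * T)"
    using l0 by (simp add: field_simps)
  have R: "m^(Suc g) * (1 + F * lam / m) = m^(Suc g) + F * (m^g * lam)"
    using m0 by (simp add: field_simps)
  have D'': "F * (l^g * (1 - lamL)) = F * l^g - F * (l^g * lamL)" by (simp add: algebra_simps)
  show ?thesis unfolding F_def[symmetric] L R using A B' C' D' D'' by linarith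
qed

lemma kappa_lt1: "kappa < 1"
proof -
  have "exp (-3/2::real) < 1" by simp
  thus ?thesis unfolding kappa_def by linarith
qed

theorem mainTheorem6:
  shows "\<exists>c::real. c > 0 \<and>
    (\<forall>f l N :: nat. 0 < f \<longrightarrow> 0 < l \<longrightarrow> 0 < N \<longrightarrow> l ^ f dvd N \<longrightarrow>
      (\<exists>h J. ising_instance N h J \<and>
         (\<forall>i<N. vertex_degree N J i \<le> f * (l - 1)) \<and>
         real (card {A. global_min N h J A}) \<ge>
           2 powr (real N * (1 - real f * log 2 (real f * sqrt (real l) / c) / real l)) \<and>
         (\<forall>A. global_min N h J A \<longrightarrow> k_minimum N h J (2 ^ f - 1) A)))"
proof -
  define c where "c = kappa / 2"
  have c0: "c > 0" using kappa_pos unfolding c_def by simp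
  have main: "\<exists>h J. ising_instance N h J \<and>
         (\<forall>i<N. vertex_degree N J i \<le> f * (l - 1)) \<and>
         real (card {A. global_min N h J A}) \<ge>
           2 powr (real N * (1 - real f * log 2 (real f * sqrt (real l) / c) / real l)) \<and>
         (\<forall>A. global_min N h J A \<longrightarrow> k_minimum N h J (2 ^ f - 1) A)"
    if f0: "0 < f" and l0: "0 < l" and N0: "0 < N" and dv: "l ^ f dvd N" for f l N :: nat
  proof -
    define q where "q = N div l^f"
    have Nq: "N = q * l^f" using dv unfolding q_def by simp
    define m where "m = 2 * (l div 2)"
    have ml: "m \<le> l" unfolding m_def by simp
    have lm1: "l \<le> m + 1" unfolding m_def by simp
    define G where "G = grid l m q f"
    define Ls where "Ls = lines l m q f"
    have GN: "G \<subseteq> {..<N}" using grid_bound[OF ml, of q f] unfolding G_def Nq by auto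
    have sub: "\<forall>L\<in>Ls. L \<subseteq> G" unfolding Ls_def G_def using lines_sub by blast
    have finLs: "finite Ls" unfolding Ls_def by (rule finite_lines)
    have cardL: "\<forall>L\<in>Ls. card L \<le> m" unfolding Ls_def using lines_card by blast
    have deg: "\<forall>v. card {L\<in>Ls. v\<in>L} \<le> f" unfolding Ls_def using lines_per_vertex[OF ml] by blast
    have strict: "\<forall>D. D \<subseteq> G \<longrightarrow> D \<noteq> {} \<longrightarrow> card D \<le> 2^f - 1 \<longrightarrow> (\<exists>L\<in>Ls. card (L \<inter> D) = 1)"
    proof (intro allI impI)
      fix D assume D: "D \<subseteq> G" "D \<noteq> {}" "card D \<le> 2^f - 1"
      have "(0::nat) < 2^f" by simp
      hence "card D < 2^f" using D(3) by linarith
      thus "\<exists>L\<in>Ls. card (L \<inter> D) = 1" using strict_lines[OF ml l0] D unfolding G_def Ls_def by blast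
    qed
    define T where "T = log 2 (real f * sqrt (real l) / c)"
    have bn: "2 powr (real N * (1 - real f * T / real l)) \<le> real (card (Bal N G Ls)) \<and> Bal N G Ls \<noteq> {}"
    proof (cases "m = 0")
      case True
      have l1: "l = 1" using True lm1 l0 by simp
      obtain g where g: "f = Suc g" using f0 by (cases f) auto
      have Ge: "G = {}" unfolding G_def g using True by simp
      define S0 where "S0 = (\<lambda>v\<in>{0..<N}. (-1::int))"
      have "S0 \<in> Bal N G Ls"
      proof -
        have "S0 \<in> assignments N" unfolding S0_def assignments_def by auto
        moreover have "\<forall>L\<in>Ls. (\<Sum>v\<in>L. S0 v) = 0" using sub Ge by auto
        ultimately show ?thesis unfolding Bal_def S0_def by auto
      qed
      hence ne: "Bal N G Ls \<noteq> {}" by auto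
      have c1: "1 \<le> real (card (Bal N G Ls))" using ne finite_Bal
        by (simp add: Suc_le_eq card_gt_0_iff)
      have T1: "1 \<le> T"
      proof -
        have "2 \<le> real f / c"
        proof -
          have "2 * c \<le> 1" unfolding c_def using kappa_lt1 by simp
          also have "\<dots> \<le> real f" using f0 by simp
          finally show ?thesis using c0 by (simp add: field_simps)
        qed
        hence "log 2 2 \<le> log 2 (real f / c)" by (intro log_mono) auto
        thus ?thesis unfolding T_def l1 by simp
      qed
      have f1: "real f \<ge> 1" using f0 by simp
      have "1 * 1 \<le> real f * T" using f1 T1 by (intro mult_mono) auto
      hence "real f * T \<ge> 1" by simp
      hence "real N * (1 - real f * T / real l) \<le> 0" unfolding l1
        by (simp add: mult_nonneg_nonpos)
      hence "2 powr (real N * (1 - real f * T / real l)) \<le> 2 powr 0" by (intro powr_mono) auto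
      also have "\<dots> \<le> real (card (Bal N G Ls))" using c1 by simp
      finally show ?thesis using ne by simp
    next
      case False
      define p where "p = l div 2"
      have m2p: "m = 2*p" unfolding m_def p_def by simp
      have p0: "p > 0" using False m2p by simp
      have cnt: "2 powr (real q * real m ^ f * (1 + real f * log 2 (kappa / sqrt m) / m)) \<le> real (card (Bal N G Ls))"
        using Bal_count[OF ml l0 m2p p0, of q f] unfolding G_def Ls_def Nq by simp
      obtain g where g: "f = Suc g" using f0 by (cases f) auto
      define lam where "lam = log 2 (kappa / sqrt m)"
      define lamL where "lamL = log 2 (kappa / sqrt l)"
      have m2: "2 \<le> real m" using m2p p0 by simp
      have lmr: "real m \<le> real l" using ml by simp
      have lm1r: "real l - 1 \<le> real m" using lm1 by simp
      have lam0: "lam \<le> 0"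
      proof -
        have s1: "sqrt (real m) \<ge> 1" using m2 by simp
        hence "kappa \<le> sqrt (real m)" using kappa_lt1 by linarith
        hence "kappa / sqrt m \<le> 1" using s1 by (simp add: divide_le_eq)
        thus ?thesis unfolding lam_def using kappa_pos m2 by simp
      qed
      have lamLl: "lamL \<le> lam"
      proof -
        have "sqrt (real m) \<le> sqrt (real l)" using lmr by simp
        hence "kappa / sqrt l \<le> kappa / sqrt m" using kappa_pos m2
          by (intro divide_left_mono) auto
        thus ?thesis unfolding lam_def lamL_def using kappa_pos m2 lmr by (intro log_mono) auto
      qed
      have TL: "1 - lamL \<le> T"
      proof -
        have sl: "sqrt (real l) > 0" using l0 by simp
        have e: "real f * sqrt (real l) / c = (2 * real f) / (kappa / sqrt l)"
          unfolding c_def using sl kappa_pos by (simp add: field_simps)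
        have "T = log 2 (2 * real f) - lamL"
          unfolding T_def e lamL_def using f0 kappa_pos sl by (intro log_divide_pos) auto
        also have "log 2 (2 * real f) = 1 + log 2 (real f)"
          using f0 by (simp add: log_mult_pos)
        finally have "T = 1 + log 2 (real f) - lamL" .
        moreover have "log 2 (real f) \<ge> 0" using f0 by simp
        ultimately show ?thesis by simp
      qed
      have ei: "real l ^ f * (1 - real f * T / real l) \<le> real m ^ f * (1 + real f * lam / real m)"
        unfolding g using exponent_ineq[OF m2 lmr lm1r lam0 lamLl TL, of g] by simp
      have "real N * (1 - real f * T / real l) = real q * (real l ^ f * (1 - real f * T / real l))"
        unfolding Nq by simp
      also have "\<dots> \<le> real q * (real m ^ f * (1 + real f * lam / real m))"
        using ei by (intro mult_left_mono) auto
      finally have "2 powr (real N * (1 - real f * T / real l)) \<le> 2 powr (real q * real m ^ f * (1 + real f * lam / real m))"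
        by (simp add: mult.assoc)
      also have "\<dots> \<le> real (card (Bal N G Ls))" using cnt unfolding lam_def .
      finally have bnd: "2 powr (real N * (1 - real f * T / real l)) \<le> real (card (Bal N G Ls))" .
      moreover have "Bal N G Ls \<noteq> {}"
      proof
        assume "Bal N G Ls = {}"
        hence "real (card (Bal N G Ls)) = 0" by simp
        moreover have "2 powr (real N * (1 - real f * T / real l)) > 0" by simp
        ultimately show False using bnd by simp
      qed
      ultimately show ?thesis by simp
    qed
    have ne: "Bal N G Ls \<noteq> {}" using bn by simp
    note I = ising_abstract[OF finLs sub GN cardL deg ne strict]
    have degl: "\<forall>i<N. vertex_degree N (Jof Ls) i \<le> f * (l - 1)"
    proof (intro allI impI)
      fix i assume "i < N"
      hence "vertex_degree N (Jof Ls) i \<le> f * (m - 1)" using I(2) by blast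
      also have "\<dots> \<le> f * (l - 1)" using ml by (intro mult_left_mono) auto
      finally show "vertex_degree N (Jof Ls) i \<le> f * (l - 1)" .
    qed
    show ?thesis
      apply (rule exI[of _ "hof G"], rule exI[of _ "Jof Ls"])
      using I(1) degl I(3) I(4) bn unfolding T_def by simp
  qed
  show ?thesis using c0 main by blast
qed

end
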